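(* The topological space $(\mathbb{X},\tau_{\mathbb{X}})$, where $\mathbb{X}=\max(\mathbb{D})$ and $\tau_{\mathbb{X}}=\{U\cap\mathbb{X} : U\text{ Scott-open in }\mathbb{D}\}$, is zero-dimensional and Hausdorff.
   Context: Fix a finite set $\mathrm{Act}$. For a dcpo $D$, $K(D)$ denotes its compact elements; a bifinite (SFP) domain is an algebraic dcpo in which for every finite $F\subseteq K(D)$ the set obtained from $F$ by repeatedly taking sets of minimal upper bounds is finite and contained in $K(D)$, and every upper bound of $F$ is above a minimal upper bound of $F$. The Scott topology consists of the sets $U$ with $U={\uparrow}(U\cap K(D))$; the Lawson topology is generated by the sets ${\uparrow}k\setminus{\uparrow}l$, $k,l\in K(D)$. The mixed powerdomain $\mathcal{M}(D)$ consists of pairs $(L,U)$ with $L$ Scott-closed, $U$ a Lawson-closed upper set, $L={\downarrow}(L\cap U)$, ordered by $(L,U)\le(L',U')$ iff $L\subseteq L'$ and $U'\subseteq U$. $\mathbb{D}$ is the initial solution over bifinite domains of $\mathbb{D}\cong\prod_{\alpha\in\mathrm{Act}}\mathcal{M}(\mathbb{D})$; $\max(\mathbb{D})$ is its set of maximal elements. A space is zero-dimensional if every open set is a union of clopen sets. *)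

theory Defs
  imports "HOL-Analysis.Analysis" "HOL-Library.FuncSet"
begin

definition up_cl :: "'a::order set \<Rightarrow> 'a set" where
  "up_cl S = {y. \<exists>x\<in>S. x \<le> y}"

definition down_cl :: "'a::order set \<Rightarrow> 'a set" where
  "down_cl S = {y. \<exists>x\<in>S. y \<le> x}"

definition directed :: "'a::order set \<Rightarrow> bool" where
  "directed S \<longleftrightarrow> S \<noteq> {} \<and> (\<forall>x\<in>S. \<forall>y\<in>S. \<exists>z\<in>S. x \<le> z \<and> y \<le> z)"

definition is_lub :: "'a::order set \<Rightarrow> 'a \<Rightarrow> bool" where
  "is_lub S x \<longleftrightarrow> (\<forall>y\<in>S. y \<le> x) \<and> (\<forall>z. (\<forall>y\<in>S. y \<le> z) \<longrightarrow> x \<le> z)"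

definition dcpo :: "'a::order itself \<Rightarrow> bool" where
  "dcpo _ \<longleftrightarrow> (\<forall>S::'a set. directed S \<longrightarrow> (\<exists>x. is_lub S x))"

definition compact_el :: "'a::order \<Rightarrow> bool" where
  "compact_el k \<longleftrightarrow>
     (\<forall>S s. directed S \<longrightarrow> is_lub S s \<longrightarrow> k \<le> s \<longrightarrow> (\<exists>x\<in>S. k \<le> x))"

definition compacts :: "'a::order set" where
  "compacts = {k. compact_el k}"

definition algebraic :: "'a::order itself \<Rightarrow> bool" where
  "algebraic T \<longleftrightarrow> dcpo T \<and>
     (\<forall>x::'a. directed {k\<in>compacts. k \<le> x} \<and> is_lub {k\<in>compacts. k \<le> x} x)"

definition ubs :: "'a::order set \<Rightarrow> 'a set" where
  "ubs F = {u. \<forall>x\<in>F. x \<le> u}"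

definition mubs :: "'a::order set \<Rightarrow> 'a set" where
  "mubs F = {u\<in>ubs F. \<forall>v\<in>ubs F. v \<le> u \<longrightarrow> v = u}"

inductive_set mub_closure :: "'a::order set \<Rightarrow> 'a set" for F where
  base: "x \<in> F \<Longrightarrow> x \<in> mub_closure F"
| step: "finite G \<Longrightarrow> G \<in> Pow (mub_closure F) \<Longrightarrow> u \<in> mubs G \<Longrightarrow> u \<in> mub_closure F"
monos Pow_mono

definition bifinite :: "'a::order itself \<Rightarrow> bool" where
  "bifinite T \<longleftrightarrow> algebraic T \<and>
     (\<forall>F::'a set. finite F \<and> F \<subseteq> compacts \<longrightarrow>
        finite (mub_closure F) \<and> mub_closure F \<subseteq> compacts \<and>
        (\<forall>u\<in>ubs F. \<exists>m\<in>mubs F. m \<le> u))"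

definition scott_open :: "'a::order set \<Rightarrow> bool" where
  "scott_open U \<longleftrightarrow> U = up_cl (U \<inter> compacts)"

definition scott_closed :: "'a::order set \<Rightarrow> bool" where
  "scott_closed L \<longleftrightarrow> scott_open (- L)"

definition scott_topology :: "'a::order topology" where
  "scott_topology = topology_generated_by {U. scott_open U}"

definition lawson_topology :: "'a::order topology" where
  "lawson_topology = topology_generated_by
     {up_cl {k} - up_cl {l} | k l. k \<in> compacts \<and> l \<in> compacts}"

definition scott_closure :: "'a::order set \<Rightarrow> 'a set" where
  "scott_closure S = \<Inter>{C. scott_closed C \<and> S \<subseteq> C}"

definition scott_continuous :: "('a::order \<Rightarrow> 'a) \<Rightarrow> bool" where
  "scott_continuous f \<longleftrightarrow> mono f \<and>
     (\<forall>S s. directed S \<longrightarrow> is_lub S s \<longrightarrow> is_lub (f ` S) (f s))"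

definition mixed_pd :: "('a::order set \<times> 'a set) set" where
  "mixed_pd = {(L, U). scott_closed L \<and> closedin lawson_topology U \<and> up_cl U = U
                       \<and> L = down_cl (L \<inter> U)}"

definition mixed_le :: "('a::order set \<times> 'a set) \<Rightarrow> ('a set \<times> 'a set) \<Rightarrow> bool" where
  "mixed_le p q \<longleftrightarrow> fst p \<subseteq> fst q \<and> snd q \<subseteq> snd p"

definition mixed_map :: "('a::order \<Rightarrow> 'a) \<Rightarrow> ('a set \<times> 'a set) \<Rightarrow> ('a set \<times> 'a set)" where
  "mixed_map f p = (scott_closure (f ` fst p), up_cl (f ` snd p))"

definition is_solution :: "'act set \<Rightarrow> ('a::order \<Rightarrow> 'act \<Rightarrow> 'a set \<times> 'a set) \<Rightarrow> bool" where
  "is_solution Act \<iota> \<longleftrightarrow>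
     bij_betw \<iota> UNIV (Pi\<^sub>E Act (\<lambda>_. mixed_pd)) \<and>
     (\<forall>x y. x \<le> y \<longleftrightarrow> (\<forall>\<alpha>\<in>Act. mixed_le (\<iota> x \<alpha>) (\<iota> y \<alpha>)))"

definition Phi :: "'act set \<Rightarrow> ('a::order \<Rightarrow> 'act \<Rightarrow> 'a set \<times> 'a set)
                    \<Rightarrow> ('a \<Rightarrow> 'a) \<Rightarrow> ('a \<Rightarrow> 'a)" where
  "Phi Act \<iota> f = (\<lambda>x. inv \<iota> (restrict (\<lambda>\<alpha>. mixed_map f (\<iota> x \<alpha>)) Act))"

text \<open>Minimal invariance (Pitts): the identity is the least fixed point of
  f |-> iota^-1 o Prod_Act M(f) o iota on Scott-continuous maps; this characterizes
  the initial (canonical bilimit) solution up to isomorphism.\<close>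
definition minimal_invariant :: "'act set \<Rightarrow> ('a::order \<Rightarrow> 'act \<Rightarrow> 'a set \<times> 'a set) \<Rightarrow> bool" where
  "minimal_invariant Act \<iota> \<longleftrightarrow>
     (\<forall>f. scott_continuous f \<and> Phi Act \<iota> f = f \<longrightarrow> (\<forall>x. x \<le> f x))"

definition initial_solution :: "'act set \<Rightarrow> ('a::order \<Rightarrow> 'act \<Rightarrow> 'a set \<times> 'a set) \<Rightarrow> bool" where
  "initial_solution Act \<iota> \<longleftrightarrow> bifinite TYPE('a) \<and> is_solution Act \<iota> \<and> minimal_invariant Act \<iota>"

definition maximal_elements :: "'a::order set" where
  "maximal_elements = {x. \<forall>y. x \<le> y \<longrightarrow> y = x}"

end

theory Submission
  imports Defs
begin

lemma up_cl_iff: "y \<in> up_cl S \<longleftrightarrow> (\<exists>x\<in>S. x \<le> y)"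
  by (simp add: up_cl_def)

lemma chain_finite_min:
  assumes "finite S" "S \<noteq> {}" "chain\<^sub>\<subseteq> C" "\<forall>y\<in>S. \<exists>A\<in>C. y \<notin> A"
  shows "\<exists>A\<in>C. \<forall>y\<in>S. y \<notin> A"
  using assms
proof (induction S rule: finite_ne_induct)
  case (singleton x) then show ?case by auto
next
  case (insert y S)
  then obtain A where A: "A \<in> C" "\<forall>z\<in>S. z \<notin> A" by auto
  from insert obtain B where B: "B \<in> C" "y \<notin> B" by auto
  from insert.prems A B have "A \<subseteq> B \<or> B \<subseteq> A" unfolding chain_subset_def by auto
  then show ?case using A B by auto
qed

lemma chain_Inter_meets:
  assumes "C \<noteq> {}" "chain\<^sub>\<subseteq> C" "finite S" "\<forall>A\<in>C. A \<inter> S \<noteq> {}"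
  shows "\<Inter>C \<inter> S \<noteq> {}"
proof
  assume h: "\<Inter>C \<inter> S = {}"
  have "S \<noteq> {}" using assms by auto
  moreover have "\<forall>y\<in>S. \<exists>A\<in>C. y \<notin> A" using h by auto
  ultimately obtain A where "A \<in> C" "\<forall>y\<in>S. y \<notin> A"
    using chain_finite_min assms by metis
  then show False using assms(4) by auto
qed

lemma rudin:
  fixes FF :: "'a::order set set"
  assumes fin: "\<forall>F\<in>FF. finite F \<and> F \<noteq> {}" and ne: "FF \<noteq> {}"
    and filt: "\<forall>F1\<in>FF. \<forall>F2\<in>FF. \<exists>F3\<in>FF. F3 \<subseteq> up_cl F1 \<and> F3 \<subseteq> up_cl F2"
  shows "\<exists>D. directed D \<and> (\<forall>F\<in>FF. D \<inter> F \<noteq> {})"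
proof -
  define P where "P A \<longleftrightarrow> (\<forall>F\<in>FF. A \<inter> F \<noteq> {}) \<and>
     (\<forall>F\<in>FF. \<forall>G\<in>FF. G \<subseteq> up_cl F \<longrightarrow> A \<inter> G \<subseteq> up_cl (A \<inter> F))" for A
  have PUNIV: "P UNIV" using fin unfolding P_def by auto
  have Pchain: "P (\<Inter>C)" if C: "C \<noteq> {}" "chain\<^sub>\<subseteq> C" "\<forall>A\<in>C. P A" for C
  proof -
    have 1: "\<Inter>C \<inter> F \<noteq> {}" if "F \<in> FF" for F
    proof -
      have "\<forall>A\<in>C. A \<inter> F \<noteq> {}" using C(3) that unfolding P_def by blast
      moreover have "finite F" using fin that by blast
      ultimately show ?thesis by (intro chain_Inter_meets[OF C(1,2)])
    qed
    have 2: "\<Inter>C \<inter> G \<subseteq> up_cl (\<Inter>C \<inter> F)" if FG: "F \<in> FF" "G \<in> FF" "G \<subseteq> up_cl F" for F G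
    proof
      fix z assume z: "z \<in> \<Inter>C \<inter> G"
      define W where "W = {w\<in>F. w \<le> z}"
      have "finite W" using fin FG unfolding W_def by auto
      moreover have "\<forall>A\<in>C. A \<inter> W \<noteq> {}"
      proof
        fix A assume "A \<in> C"
        then have "A \<inter> G \<subseteq> up_cl (A \<inter> F)" using C(3) FG unfolding P_def by blast
        moreover have "z \<in> A \<inter> G" using z \<open>A \<in> C\<close> by blast
        ultimately have "z \<in> up_cl (A \<inter> F)" by blast
        then obtain w where "w \<in> A \<inter> F" "w \<le> z" unfolding up_cl_def by blast
        then have "w \<in> A \<inter> W" unfolding W_def by blast
        then show "A \<inter> W \<noteq> {}" by blast
      qed
      ultimately have "\<Inter>C \<inter> W \<noteq> {}" by (intro chain_Inter_meets[OF C(1,2)])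
      then obtain w where "w \<in> \<Inter>C" "w \<in> F" "w \<le> z" unfolding W_def by blast
      then show "z \<in> up_cl (\<Inter>C \<inter> F)" unfolding up_cl_def by blast
    qed
    show ?thesis unfolding P_def
    proof (intro conjI ballI impI)
      fix F assume "F \<in> FF" then show "\<Inter>C \<inter> F \<noteq> {}" by (rule 1)
    next
      fix F G assume "F \<in> FF" "G \<in> FF" "G \<subseteq> up_cl F"
      then show "\<Inter>C \<inter> G \<subseteq> up_cl (\<Inter>C \<inter> F)" by (rule 2)
    qed
  qed
  define AA where "AA = uminus ` {A. P A}"
  have "\<forall>C\<in>chains AA. \<Union>C \<in> AA"
  proof
    fix C assume C: "C \<in> chains AA"
    show "\<Union>C \<in> AA"
    proof (cases "C = {}")
      case True then show ?thesis using PUNIV unfolding AA_def by auto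
    next
      case False
      define C' where "C' = uminus ` C"
      have "C' \<noteq> {}" using False C'_def by auto
      moreover have "chain\<^sub>\<subseteq> C'" using C unfolding C'_def chains_def chain_subset_def by blast
      moreover have "\<forall>A\<in>C'. P A" using C unfolding C'_def chains_def AA_def by auto
      ultimately have "P (\<Inter>C')" using Pchain by blast
      moreover have "\<Union>C = - \<Inter>C'" unfolding C'_def by auto
      ultimately show ?thesis unfolding AA_def by auto
    qed
  qed
  from Zorn_Lemma[OF this] obtain M where M: "M \<in> AA" "\<forall>X\<in>AA. M \<subseteq> X \<longrightarrow> X = M" by blast
  define A0 where "A0 = - M"
  have PA0: "P A0" using M(1) unfolding AA_def A0_def by auto
  have minA0: "A = A0" if "P A" "A \<subseteq> A0" for A
  proof -
    have "-A \<in> AA" using that unfolding AA_def by auto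
    moreover have "M \<subseteq> -A" using that unfolding A0_def by auto
    ultimately have "-A = M" using M(2) by blast
    then show ?thesis unfolding A0_def by auto
  qed
  have key: "\<exists>F\<in>FF. A0 \<inter> F \<subseteq> up_cl {x}" if x: "x \<in> A0" for x
  proof (rule ccontr)
    assume nk: "\<not> ?thesis"
    define A where "A = A0 - up_cl {x}"
    have "P A"
    proof -
      have "\<forall>F\<in>FF. A \<inter> F \<noteq> {}" using nk unfolding A_def by blast
      moreover have "\<forall>F\<in>FF. \<forall>G\<in>FF. G \<subseteq> up_cl F \<longrightarrow> A \<inter> G \<subseteq> up_cl (A \<inter> F)"
      proof (intro ballI impI subsetI)
        fix F G z assume h: "F \<in> FF" "G \<in> FF" "G \<subseteq> up_cl F" "z \<in> A \<inter> G"
        then have "z \<in> up_cl (A0 \<inter> F)" using PA0 unfolding P_def A_def by blast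
        then obtain w where w: "w \<in> A0 \<inter> F" "w \<le> z" unfolding up_cl_def by blast
        have "w \<notin> up_cl {x}"
        proof
          assume "w \<in> up_cl {x}"
          then have "x \<le> z" using w unfolding up_cl_def by auto
          then show False using h(4) unfolding A_def up_cl_def by auto
        qed
        then show "z \<in> up_cl (A \<inter> F)" using w unfolding A_def up_cl_def by blast
      qed
      ultimately show ?thesis unfolding P_def by blast
    qed
    moreover have "A \<subseteq> A0" unfolding A_def by auto
    ultimately have "A = A0" using minA0 by blast
    moreover have "x \<notin> A" unfolding A_def up_cl_def by auto
    ultimately show False using x by auto
  qed
  have "directed A0"
    unfolding directed_def
  proof (intro conjI ballI)
    obtain F where "F \<in> FF" using ne by auto
    then show "A0 \<noteq> {}" using PA0 unfolding P_def by auto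
  next
    fix x y assume xy: "x \<in> A0" "y \<in> A0"
    obtain F where F: "F \<in> FF" "A0 \<inter> F \<subseteq> up_cl {x}" using key xy by blast
    obtain G where G: "G \<in> FF" "A0 \<inter> G \<subseteq> up_cl {y}" using key xy by blast
    obtain H where H: "H \<in> FF" "H \<subseteq> up_cl F" "H \<subseteq> up_cl G" using filt F G by blast
    obtain z where z: "z \<in> A0 \<inter> H" using PA0 H unfolding P_def by blast
    have "z \<in> up_cl (A0 \<inter> F)" "z \<in> up_cl (A0 \<inter> G)" using PA0 F G H z unfolding P_def by blast+
    then obtain u v where "u \<in> A0 \<inter> F" "u \<le> z" "v \<in> A0 \<inter> G" "v \<le> z" unfolding up_cl_def by blast
    then have "x \<le> u" "y \<le> v" using F G unfolding up_cl_def by blast+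
    then have "x \<le> z" "y \<le> z" using \<open>u \<le> z\<close> \<open>v \<le> z\<close> by auto
    then show "\<exists>z\<in>A0. x \<le> z \<and> y \<le> z" using z by blast
  qed
  then show ?thesis using PA0 unfolding P_def by blast
qed


lemma bif_parts:
  assumes "bifinite TYPE('a::order)"
  shows "\<And>S::'a set. directed S \<Longrightarrow> \<exists>x. is_lub S x"
    and "\<And>x::'a. directed {k\<in>compacts. k \<le> x} \<and> is_lub {k\<in>compacts. k \<le> x} x"
    and "\<And>F::'a set. finite F \<Longrightarrow> F \<subseteq> compacts \<Longrightarrow> finite (mub_closure F)"
    and "\<And>F::'a set. finite F \<Longrightarrow> F \<subseteq> compacts \<Longrightarrow> u \<in> ubs F \<Longrightarrow> \<exists>m\<in>mubs F. m \<le> u"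
  using assms unfolding bifinite_def algebraic_def dcpo_def by blast+

lemma sep:
  assumes B: "bifinite TYPE('a::order)" and k: "(k::'a) \<in> compacts"
    and x: "x \<in> maximal_elements" and nk: "\<not> k \<le> x"
  shows "\<exists>l\<in>compacts. l \<le> x \<and> ubs {k,l} = {}"
proof (rule ccontr)
  assume "\<not> ?thesis"
  then have cons: "\<And>l. l \<in> compacts \<Longrightarrow> l \<le> x \<Longrightarrow> ubs {k,l} \<noteq> {}" by blast
  define C where "C = {l\<in>compacts. l \<le> x}"
  have dirC: "directed C" and lubC: "is_lub C x" using bif_parts(2)[OF B, of x] unfolding C_def by auto
  define FF where "FF = (\<lambda>l. mubs {k,l}) ` C"
  have fin: "\<forall>F\<in>FF. finite F \<and> F \<noteq> {}"
  proof
    fix F assume "F \<in> FF"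
    then obtain l where l: "l \<in> C" "F = mubs {k,l}" unfolding FF_def by blast
    have kl: "finite {k,l}" "{k,l} \<subseteq> compacts" using k l unfolding C_def by auto
    have "mubs {k,l} \<subseteq> mub_closure {k,l}"
    proof
      fix u assume "u \<in> mubs {k,l}"
      moreover have "{k,l} \<in> Pow (mub_closure {k,l})" by (auto intro: mub_closure.base)
      ultimately show "u \<in> mub_closure {k,l}" using kl(1) by (blast intro: mub_closure.step)
    qed
    then have "finite F" using bif_parts(3)[OF B kl] l(2) finite_subset by blast
    moreover obtain u where "u \<in> ubs {k,l}" using cons l unfolding C_def by blast
    then have "F \<noteq> {}" using bif_parts(4)[OF B kl(1) kl(2), of u] l(2) by blast
    ultimately show "finite F \<and> F \<noteq> {}" by blast
  qed
  have ne: "FF \<noteq> {}" using dirC unfolding FF_def directed_def by blast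
  have filt: "\<forall>F1\<in>FF. \<forall>F2\<in>FF. \<exists>F3\<in>FF. F3 \<subseteq> up_cl F1 \<and> F3 \<subseteq> up_cl F2"
  proof (intro ballI)
    fix F1 F2 assume "F1 \<in> FF" "F2 \<in> FF"
    then obtain l1 l2 where l: "l1 \<in> C" "l2 \<in> C" "F1 = mubs {k,l1}" "F2 = mubs {k,l2}"
      unfolding FF_def by blast
    then obtain l3 where l3: "l3 \<in> C" "l1 \<le> l3" "l2 \<le> l3" using dirC unfolding directed_def by blast
    have sub: "mubs {k,l3} \<subseteq> up_cl (mubs {k,li})" if "li \<in> C" "li \<le> l3" for li
    proof
      fix u assume u: "u \<in> mubs {k,l3}"
      then have "u \<in> ubs {k,li}" using that unfolding mubs_def ubs_def by (auto intro: order_trans)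
      moreover have fk: "finite {k,li}" "{k,li} \<subseteq> compacts" using k that unfolding C_def by auto
      ultimately obtain m where "m \<in> mubs {k,li}" "m \<le> u" using bif_parts(4)[OF B fk] by blast
      then show "u \<in> up_cl (mubs {k,li})" unfolding up_cl_def by blast
    qed
    show "\<exists>F3\<in>FF. F3 \<subseteq> up_cl F1 \<and> F3 \<subseteq> up_cl F2"
      using sub[OF l(1) l3(2)] sub[OF l(2) l3(3)] l l3(1) unfolding FF_def by blast
  qed
  obtain D where D: "directed D" "\<forall>F\<in>FF. D \<inter> F \<noteq> {}" using rudin[OF fin ne filt] by blast
  obtain s where s: "is_lub D s" using bif_parts(1)[OF B D(1)] by blast
  have above: "k \<le> s \<and> l \<le> s" if "l \<in> C" for l
  proof -
    have "mubs {k,l} \<in> FF" using that unfolding FF_def by blast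
    then obtain d where "d \<in> D" "d \<in> mubs {k,l}" using D(2) by blast
    moreover have "d \<le> s" using s \<open>d \<in> D\<close> unfolding is_lub_def by blast
    ultimately show ?thesis unfolding mubs_def ubs_def by (auto intro: order_trans)
  qed
  have "x \<le> s" using lubC above unfolding is_lub_def by blast
  then have "s = x" using x unfolding maximal_elements_def by blast
  moreover obtain l where "l \<in> C" using dirC unfolding directed_def by blast
  ultimately show False using above nk by blast
qed

lemma up_cl_scott_open:
  assumes "k \<in> compacts" shows "scott_open (up_cl {k})"
  unfolding scott_open_def
proof
  show "up_cl {k} \<subseteq> up_cl (up_cl {k} \<inter> compacts)"
    using assms unfolding up_cl_def by auto
  show "up_cl (up_cl {k} \<inter> compacts) \<subseteq> up_cl {k}"
    unfolding up_cl_def by (auto intro: order_trans)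
qed

lemma open_nbhd:
  assumes "generate_topology_on {U::'a::order set. scott_open U} V" "x \<in> V"
  shows "\<exists>Ks. finite Ks \<and> Ks \<subseteq> compacts \<and> (\<forall>k\<in>Ks. k \<le> x) \<and> {y. \<forall>k\<in>Ks. k \<le> y} \<subseteq> V"
  using assms
proof (induction arbitrary: x rule: generate_topology_on.induct)
  case Empty then show ?case by auto
next
  case (Int a b)
  then have "x \<in> a" "x \<in> b" by auto
  then obtain K1 K2 where K1: "finite K1" "K1 \<subseteq> compacts" "\<forall>k\<in>K1. k \<le> x" "{y. \<forall>k\<in>K1. k \<le> y} \<subseteq> a"
    and K2: "finite K2" "K2 \<subseteq> compacts" "\<forall>k\<in>K2. k \<le> x" "{y. \<forall>k\<in>K2. k \<le> y} \<subseteq> b"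
    using Int.IH by meson
  have "{y. \<forall>k\<in>K1 \<union> K2. k \<le> y} \<subseteq> a \<inter> b" using K1(4) K2(4) by auto
  moreover have "finite (K1 \<union> K2)" "K1 \<union> K2 \<subseteq> compacts" "\<forall>k\<in>K1 \<union> K2. k \<le> x"
    using K1 K2 by auto
  ultimately show ?case by blast
next
  case (UN K)
  from UN.prems obtain V where V: "V \<in> K" "x \<in> V" by (rule UnionE)
  from UN.IH[OF V] obtain Ks where "finite Ks" "Ks \<subseteq> compacts" "\<forall>k\<in>Ks. k \<le> x" "{y. \<forall>k\<in>Ks. k \<le> y} \<subseteq> V"
    by blast
  moreover have "V \<subseteq> \<Union>K" using V(1) by (rule Union_upper)
  ultimately have "finite Ks \<and> Ks \<subseteq> compacts \<and> (\<forall>k\<in>Ks. k \<le> x) \<and> {y. \<forall>k\<in>Ks. k \<le> y} \<subseteq> \<Union>K"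
    by (meson subset_trans)
  then show ?case by (rule exI)
next
  case (Basis s)
  then have "scott_open s" by simp
  then have so: "s = up_cl (s \<inter> compacts)" unfolding scott_open_def .
  have "x \<in> up_cl (s \<inter> compacts)" using Basis.prems by (subst so[symmetric])
  then obtain k where k: "k \<in> s" "k \<in> compacts" "k \<le> x" unfolding up_cl_def by blast
  have "{y. \<forall>k'\<in>{k}. k' \<le> y} \<subseteq> s"
  proof
    fix y assume "y \<in> {y. \<forall>k'\<in>{k}. k' \<le> y}"
    then have "y \<in> up_cl (s \<inter> compacts)" using k unfolding up_cl_def by blast
    then show "y \<in> s" by (simp only: so[symmetric])
  qed
  then show ?case using k by (intro exI[of _ "{k}"]) auto
qed

theorem proposition3p2:
  fixes Act :: "'act set" and \<iota> :: "'a::order \<Rightarrow> 'act \<Rightarrow> 'a set \<times> 'a set"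
  assumes "finite Act"
    and "initial_solution Act \<iota>"
  shows "subtopology scott_topology (maximal_elements :: 'a set) dim_le 0
       \<and> Hausdorff_space (subtopology scott_topology (maximal_elements :: 'a set))"
proof -
  have B: "bifinite TYPE('a)" using assms(2) unfolding initial_solution_def by blast
  define M where "M = (maximal_elements :: 'a set)"
  define X where "X = subtopology scott_topology M"
  have "scott_open (UNIV :: 'a set)"
    unfolding scott_open_def
  proof -
    have "x \<in> up_cl compacts" for x :: 'a
      using bif_parts(2)[OF B, of x] unfolding directed_def up_cl_def by blast
    then show "(UNIV::'a set) = up_cl (UNIV \<inter> compacts)" by auto
  qed
  then have "topspace (scott_topology :: 'a topology) = UNIV"
    unfolding scott_topology_def by auto
  then have topX: "topspace X = M" unfolding X_def by simp
  have openk: "openin X (M \<inter> up_cl {k})" if "k \<in> compacts" for k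
  proof -
    have "openin scott_topology (up_cl {k})"
      unfolding scott_topology_def using up_cl_scott_open[OF that]
      by (intro topology_generated_by_Basis) blast
    moreover have "M \<inter> up_cl {k} = up_cl {k} \<inter> M" by (rule Int_commute)
    ultimately show ?thesis unfolding X_def openin_subtopology by (intro exI[of _ "up_cl {k}"]) simp
  qed
  have closedk: "closedin X (M \<inter> up_cl {k})" if k: "k \<in> compacts" for k
    unfolding closedin_def
  proof
    show "M \<inter> up_cl {k} \<subseteq> topspace X" by (simp add: topX)
    show "openin X (topspace X - M \<inter> up_cl {k})"
    proof (rule openin_subopen[THEN iffD2], intro ballI)
      fix x assume "x \<in> topspace X - M \<inter> up_cl {k}"
      then have x: "x \<in> M" "\<not> k \<le> x" by (auto simp: topX up_cl_def)
      then obtain l where l: "l \<in> compacts" "l \<le> x" "ubs {k,l} = {}"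
        using sep[OF B k x(1)[unfolded M_def] x(2)] by blast
      have "M \<inter> up_cl {l} \<subseteq> topspace X - M \<inter> up_cl {k}"
      proof
        fix y assume y: "y \<in> M \<inter> up_cl {l}"
        have "\<not> k \<le> y"
        proof
          assume "k \<le> y"
          then have "y \<in> ubs {k,l}" using y unfolding ubs_def up_cl_def by auto
          then show False using l by blast
        qed
        then show "y \<in> topspace X - M \<inter> up_cl {k}" using y by (auto simp: topX up_cl_def)
      qed
      moreover have "x \<in> M \<inter> up_cl {l}" using x l unfolding up_cl_def by auto
      ultimately show "\<exists>T. openin X T \<and> x \<in> T \<and> T \<subseteq> topspace X - M \<inter> up_cl {k}"
        using openk[OF l(1)] by (intro exI[of _ "M \<inter> up_cl {l}"]) simp
    qed
  qed
  have clopen: "openin X (M \<inter> {y. \<forall>k\<in>Ks. k \<le> y}) \<and> closedin X (M \<inter> {y. \<forall>k\<in>Ks. k \<le> y})"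
    if "finite Ks" "Ks \<subseteq> compacts" for Ks
    using that
  proof (induction Ks rule: finite_induct)
    case empty
    have "openin X (topspace X)" "closedin X (topspace X)" by auto
    then show ?case using topX by simp
  next
    case (insert k Ks)
    have eq: "M \<inter> {y. \<forall>k'\<in>insert k Ks. k' \<le> y} = (M \<inter> up_cl {k}) \<inter> (M \<inter> {y. \<forall>k\<in>Ks. k \<le> y})"
      unfolding up_cl_def by auto
    have k: "k \<in> compacts" and Ks: "Ks \<subseteq> compacts" using insert.prems by auto
    have IH: "openin X (M \<inter> {y. \<forall>k\<in>Ks. k \<le> y})" "closedin X (M \<inter> {y. \<forall>k\<in>Ks. k \<le> y})"
      using insert.IH[OF Ks] by auto
    show ?case unfolding eq using openin_Int[OF openk[OF k] IH(1)] closedin_Int[OF closedk[OF k] IH(2)]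
      by (rule conjI)
  qed
  have dim: "X dim_le 0"
    unfolding dimension_le_0_neighbourhood_base_of_clopen neighbourhood_base_of_def
      neighbourhood_base_at_def
  proof (intro ballI allI impI)
    fix x W assume xW: "x \<in> topspace X" "openin X W \<and> x \<in> W"
    then obtain T where T: "openin scott_topology T" "W = T \<inter> M"
      unfolding X_def openin_subtopology by blast
    have gT: "generate_topology_on {U::'a set. scott_open U} T"
      using T(1) unfolding scott_topology_def by (rule openin_topology_generated_by)
    have xT: "x \<in> T" using xW T(2) by simp
    obtain Ks where Ks: "finite Ks" "Ks \<subseteq> compacts" "\<forall>k\<in>Ks. k \<le> x" "{y. \<forall>k\<in>Ks. k \<le> y} \<subseteq> T"
      using open_nbhd[OF gT xT] by blast
    let ?N = "M \<inter> {y. \<forall>k\<in>Ks. k \<le> y}"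
    have "?N \<subseteq> W" unfolding T(2) using Ks(4) by blast
    moreover have "x \<in> M" using xW(1) topX by simp
    then have "x \<in> ?N" using Ks(3) by simp
    ultimately show "\<exists>U V. openin X U \<and> (closedin X V \<and> openin X V) \<and> x \<in> U \<and> U \<subseteq> V \<and> V \<subseteq> W"
      using clopen[OF Ks(1,2)] by (intro exI[of _ ?N]) simp
  qed
  have haus: "Hausdorff_space X"
    unfolding Hausdorff_space_def
  proof (intro allI impI)
    fix x y assume h: "x \<in> topspace X \<and> y \<in> topspace X \<and> x \<noteq> y"
    then have xy: "x \<in> M" "y \<in> M" "x \<noteq> y" using topX by auto
    have "\<not> x \<le> y"
    proof
      assume "x \<le> y"
      then have "y = x" using xy(1) unfolding M_def maximal_elements_def by blast
      then show False using xy(3) by simp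
    qed
    have "\<exists>k. k \<in> compacts \<and> k \<le> x \<and> \<not> k \<le> y"
    proof (rule ccontr)
      assume "\<not> ?thesis"
      then have "\<forall>k\<in>{k\<in>compacts. k \<le> x}. k \<le> y" by blast
      moreover have "is_lub {k\<in>compacts. k \<le> x} x" using bif_parts(2)[OF B, of x] by blast
      ultimately have "x \<le> y" unfolding is_lub_def by blast
      then show False using \<open>\<not> x \<le> y\<close> by blast
    qed
    then obtain k where k: "k \<in> compacts" "k \<le> x" "\<not> k \<le> y" by blast
    then obtain l where l: "l \<in> compacts" "l \<le> y" "ubs {k,l} = {}"
      using sep[OF B k(1) _ k(3)] xy(2) unfolding M_def by blast
    have "disjnt (M \<inter> up_cl {k}) (M \<inter> up_cl {l})"
    proof -
      have "False" if "z \<in> up_cl {k}" "z \<in> up_cl {l}" for z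
      proof -
        have "k \<le> z" "l \<le> z" using that unfolding up_cl_def by auto
        then have "z \<in> ubs {k,l}" unfolding ubs_def by auto
        then show False using l(3) by blast
      qed
      then show ?thesis unfolding disjnt_def by blast
    qed
    moreover have "x \<in> M \<inter> up_cl {k}" "y \<in> M \<inter> up_cl {l}" using xy k l unfolding up_cl_def by auto
    ultimately show "\<exists>U V. openin X U \<and> openin X V \<and> x \<in> U \<and> y \<in> V \<and> disjnt U V"
      using openk[OF k(1)] openk[OF l(1)] by (intro exI[of _ "M \<inter> up_cl {k}"] exI[of _ "M \<inter> up_cl {l}"]) simp
  qed
  have eqX: "X = subtopology scott_topology (maximal_elements :: 'a set)" unfolding X_def M_def by (rule refl)
  show ?thesis using dim haus unfolding eqX by (rule conjI)
qed

end
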